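(* Let $\mathfrak R$ be an iterated graph system satisfying (GR1)–(GR3), with replacement graphs $G_m$. Let $w=w_1\cdots w_m$ and $v=v_1\cdots v_m$ be distinct words in $W_m$ and $k:=|w\wedge v|$. Then $(w,v)\in E(G_m)$ if and only if $(w_k,v_k)\in E(G_1)$ and $(w_i,v_i)\in I_{\mathfrak t(w_k,v_k)}$ for all $k<i\le m$. Furthermore, if $\{w,v\}\in E(G_m)$, then $\mathfrak t(w,v)=\mathfrak t(w_k,v_k)$.
   Context: A graph is a pair $(V,E)$ with $V$ finite non-empty and $E\subseteq V\times V$ such that $(x,y)\in E$ implies $(y,x)\notin E$; write $\{x,y\}\in E$ if $(x,y)\in E$ or $(y,x)\in E$, and the type of an unordered edge is the type of whichever ordered pair lies in the edge set. An iterated graph system (IGS) consists of a connected graph $G_1=(S,E)$, a finite set $\mathcal T$ of types, a surjective typing function $\mathfrak t:E\to\mathcal T$, and for each $t\in\mathcal T$ a non-empty set $I_t\subseteq S\times S$. Let $W_m=S^m$, $[w]_k=w_1\cdots w_k$, and for distinct words $w,v$ of the same length $|w\wedge v|=\min\{k:[w]_k\ne[v]_k\}$. The replacement graphs $G_m=(W_m,E_m)$ with typings (denoted $\mathfrak t$ at every level) are defined recursively: $G_1$ given; $(w,v)\in E_{m+1}$ iff either (1) $[w]_m=[v]_m$ and $(w_{m+1},v_{m+1})\in E$, with type $\mathfrak t(w_{m+1},v_{m+1})$; or (2) $([w]_m,[v]_m)\in E_m$ and $(w_{m+1},v_{m+1})\in I_{\mathfrak t([w]_m,[v]_m)}$,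 with type $\mathfrak t([w]_m,[v]_m)$. Let $I_{t,+}=\{w:(w,v)\in I_t\text{ for some }v\}$, $I_{t,-}=\{v:(w,v)\in I_t\text{ for some }w\}$, $\mathfrak b_t^+(w)=|\{v:(w,v)\in I_t\}|$, $\mathfrak b_t^-(w)=|\{v:(v,w)\in I_t\}|$, $\deg_t^+(w)=|\{v:(w,v)\in E\text{ of type }t\}|$, $\deg_t^-(w)=|\{v:(v,w)\in E\text{ of type }t\}|$. (GR1): $\mathfrak b_t^\star(w)\in\{0,1\}$ for all $t,\star,w$; (GR2): $\mathfrak b_t^\star(w)$ and $\deg_t^\star(w)$ are never simultaneously non-zero; (GR3): $I_{t,-}\cap I_{t,+}=\emptyset$ for all $t$. *)

theory Defs
  imports Main
begin

definition is_graph :: "'a set \<Rightarrow> ('a \<times> 'a) set \<Rightarrow> bool" where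
  "is_graph S E \<longleftrightarrow> finite S \<and> S \<noteq> {} \<and> E \<subseteq> S \<times> S \<and>
     (\<forall>x y. (x, y) \<in> E \<longrightarrow> (y, x) \<notin> E)"

definition connected_graph :: "'a set \<Rightarrow> ('a \<times> 'a) set \<Rightarrow> bool" where
  "connected_graph S E \<longleftrightarrow> is_graph S E \<and>
     (\<forall>x\<in>S. \<forall>y\<in>S. (x, y) \<in> (E \<union> E\<inverse>)\<^sup>*)"

definition IGS :: "'a set \<Rightarrow> ('a \<times> 'a) set \<Rightarrow> 'b set \<Rightarrow> ('a \<times> 'a \<Rightarrow> 'b)
                   \<Rightarrow> ('b \<Rightarrow> ('a \<times> 'a) set) \<Rightarrow> bool" where
  "IGS S E T tp I \<longleftrightarrow> connected_graph S E \<and> finite T \<and> tp ` E = T \<and>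
     (\<forall>t\<in>T. I t \<noteq> {} \<and> I t \<subseteq> S \<times> S)"

definition words :: "'a set \<Rightarrow> nat \<Rightarrow> 'a list set" where
  "words S m = {w. length w = m \<and> set w \<subseteq> S}"

text \<open>Replacement graphs with typing, encoded as a set of typed ordered edges
  \<open>(w, v, type)\<close>; level m (m \<ge> 1) is \<open>G_m\<close>; level 0 is unused (empty).\<close>
fun RG :: "'a set \<Rightarrow> ('a \<times> 'a) set \<Rightarrow> ('a \<times> 'a \<Rightarrow> 'b) \<Rightarrow> ('b \<Rightarrow> ('a \<times> 'a) set)
           \<Rightarrow> nat \<Rightarrow> ('a list \<times> 'a list \<times> 'b) set" where
  "RG S E tp I 0 = {}"
| "RG S E tp I (Suc 0) = {([x], [y], tp (x, y)) | x y. (x, y) \<in> E}"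
| "RG S E tp I (Suc (Suc m)) =
     {(u @ [a], u @ [b], tp (a, b)) | u a b. u \<in> words S (Suc m) \<and> (a, b) \<in> E}
   \<union> {(u @ [a], u' @ [b], \<tau>) | u u' a b \<tau>. (u, u', \<tau>) \<in> RG S E tp I (Suc m) \<and> (a, b) \<in> I \<tau>}"

definition RG_edges :: "'a set \<Rightarrow> ('a \<times> 'a) set \<Rightarrow> ('a \<times> 'a \<Rightarrow> 'b) \<Rightarrow> ('b \<Rightarrow> ('a \<times> 'a) set)
           \<Rightarrow> nat \<Rightarrow> ('a list \<times> 'a list) set" where
  "RG_edges S E tp I m = {(w, v). \<exists>\<tau>. (w, v, \<tau>) \<in> RG S E tp I m}"

definition RG_type :: "'a set \<Rightarrow> ('a \<times> 'a) set \<Rightarrow> ('a \<times> 'a \<Rightarrow> 'b) \<Rightarrow> ('b \<Rightarrow> ('a \<times> 'a) set)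
           \<Rightarrow> nat \<Rightarrow> 'a list \<Rightarrow> 'a list \<Rightarrow> 'b" where
  "RG_type S E tp I m w v = (THE \<tau>. (w, v, \<tau>) \<in> RG S E tp I m)"

definition b_plus :: "('b \<Rightarrow> ('a \<times> 'a) set) \<Rightarrow> 'b \<Rightarrow> 'a \<Rightarrow> nat" where
  "b_plus I t w = card {v. (w, v) \<in> I t}"
definition b_minus :: "('b \<Rightarrow> ('a \<times> 'a) set) \<Rightarrow> 'b \<Rightarrow> 'a \<Rightarrow> nat" where
  "b_minus I t w = card {v. (v, w) \<in> I t}"
definition deg_plus :: "('a \<times> 'a) set \<Rightarrow> ('a \<times> 'a \<Rightarrow> 'b) \<Rightarrow> 'b \<Rightarrow> 'a \<Rightarrow> nat" where
  "deg_plus E tp t w = card {v. (w, v) \<in> E \<and> tp (w, v) = t}"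
definition deg_minus :: "('a \<times> 'a) set \<Rightarrow> ('a \<times> 'a \<Rightarrow> 'b) \<Rightarrow> 'b \<Rightarrow> 'a \<Rightarrow> nat" where
  "deg_minus E tp t w = card {v. (v, w) \<in> E \<and> tp (v, w) = t}"

definition GR1 :: "'a set \<Rightarrow> 'b set \<Rightarrow> ('b \<Rightarrow> ('a \<times> 'a) set) \<Rightarrow> bool" where
  "GR1 S T I \<longleftrightarrow> (\<forall>t\<in>T. \<forall>w\<in>S. b_plus I t w \<le> 1 \<and> b_minus I t w \<le> 1)"

definition GR2 :: "'a set \<Rightarrow> ('a \<times> 'a) set \<Rightarrow> 'b set \<Rightarrow> ('a \<times> 'a \<Rightarrow> 'b)
                   \<Rightarrow> ('b \<Rightarrow> ('a \<times> 'a) set) \<Rightarrow> bool" where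
  "GR2 S E T tp I \<longleftrightarrow> (\<forall>t\<in>T. \<forall>w\<in>S.
      \<not> (b_plus I t w \<noteq> 0 \<and> deg_plus E tp t w \<noteq> 0) \<and>
      \<not> (b_minus I t w \<noteq> 0 \<and> deg_minus E tp t w \<noteq> 0))"

definition GR3 :: "'b set \<Rightarrow> ('b \<Rightarrow> ('a \<times> 'a) set) \<Rightarrow> bool" where
  "GR3 T I \<longleftrightarrow> (\<forall>t\<in>T. Range (I t) \<inter> Domain (I t) = {})"

text \<open>\<open>|w \<and> v|\<close>: first (1-based) position where the words differ.\<close>
definition first_diff :: "'a list \<Rightarrow> 'a list \<Rightarrow> nat" where
  "first_diff w v = (LEAST k. take k w \<noteq> take k v)"

end

theory Submission
  imports Defs
begin

lemma fd_app:
  assumes "a \<noteq> b"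
  shows "first_diff (p @ a # xs) (p @ b # ys) = Suc (length p)"
  unfolding first_diff_def
proof (rule Least_equality)
  show "take (Suc (length p)) (p @ a # xs) \<noteq> take (Suc (length p)) (p @ b # ys)"
    using assms by simp
next
  fix y assume "take y (p @ a # xs) \<noteq> take y (p @ b # ys)"
  then show "Suc (length p) \<le> y"
    by (cases "y \<le> length p") auto
qed

lemma RG_char:
  "n \<ge> 1 \<Longrightarrow> (w, v, \<tau>) \<in> RG S E tp I n \<longleftrightarrow>
    (\<exists>p a b xs ys. w = p @ a # xs \<and> v = p @ b # ys \<and> set p \<subseteq> S \<and> (a, b) \<in> E \<and>
       \<tau> = tp (a, b) \<and> list_all2 (\<lambda>x y. (x, y) \<in> I \<tau>) xs ys \<and> length w = n)"
proof (induction n arbitrary: w v \<tau>)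
  case 0 then show ?case by simp
next
  case (Suc n)
  show ?case
  proof (cases n)
    case 0
    then show ?thesis
      apply auto
      apply (rule exI[of _ "[]"], auto)
      done
  next
    case (Suc m)
    have IH: "\<And>w v \<tau>. (w, v, \<tau>) \<in> RG S E tp I (Suc m) \<longleftrightarrow>
      (\<exists>p a b xs ys. w = p @ a # xs \<and> v = p @ b # ys \<and> set p \<subseteq> S \<and> (a, b) \<in> E \<and>
       \<tau> = tp (a, b) \<and> list_all2 (\<lambda>x y. (x, y) \<in> I \<tau>) xs ys \<and> length w = Suc m)"
      using Suc.IH Suc by simp
    show ?thesis
    proof
      assume "(w, v, \<tau>) \<in> RG S E tp I (Suc n)"
      then consider (A) u a b where "w = u @ [a]" "v = u @ [b]" "\<tau> = tp (a, b)"
          "u \<in> words S (Suc m)" "(a, b) \<in> E"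
        | (B) u u' a b where "w = u @ [a]" "v = u' @ [b]" "(u, u', \<tau>) \<in> RG S E tp I (Suc m)"
          "(a, b) \<in> I \<tau>"
        using Suc by auto
      then show "\<exists>p a b xs ys. w = p @ a # xs \<and> v = p @ b # ys \<and> set p \<subseteq> S \<and> (a, b) \<in> E \<and>
       \<tau> = tp (a, b) \<and> list_all2 (\<lambda>x y. (x, y) \<in> I \<tau>) xs ys \<and> length w = Suc n"
      proof cases
        case A
        then show ?thesis using Suc unfolding words_def
          by (intro exI[of _ u] exI[of _ a] exI[of _ b] exI[of _ "[]"]) auto
      next
        case B
        then obtain p a' b' xs ys where h: "u = p @ a' # xs" "u' = p @ b' # ys" "set p \<subseteq> S"
          "(a', b') \<in> E" "\<tau> = tp (a', b')" "list_all2 (\<lambda>x y. (x, y) \<in> I \<tau>) xs ys"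
          "length u = Suc m"
          using IH by blast
        show ?thesis
          apply (rule exI[of _ p], rule exI[of _ a'], rule exI[of _ b'],
                 rule exI[of _ "xs @ [a]"], rule exI[of _ "ys @ [b]"])
          using h B Suc by (auto simp: list_all2_appendI)
      qed
    next
      assume "\<exists>p a b xs ys. w = p @ a # xs \<and> v = p @ b # ys \<and> set p \<subseteq> S \<and> (a, b) \<in> E \<and>
       \<tau> = tp (a, b) \<and> list_all2 (\<lambda>x y. (x, y) \<in> I \<tau>) xs ys \<and> length w = Suc n"
      then obtain p a b xs ys where h: "w = p @ a # xs" "v = p @ b # ys" "set p \<subseteq> S"
          "(a, b) \<in> E" "\<tau> = tp (a, b)" "list_all2 (\<lambda>x y. (x, y) \<in> I \<tau>) xs ys"
          "length w = Suc n" by blast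
      show "(w, v, \<tau>) \<in> RG S E tp I (Suc n)"
      proof (cases xs rule: rev_cases)
        case Nil
        then have "ys = []" using h(6) by simp
        moreover have "p \<in> words S (Suc m)" using h Nil Suc by (simp add: words_def)
        ultimately show ?thesis using h Nil Suc by auto
      next
        case (snoc xs' x)
        then obtain ys' y where ys: "ys = ys' @ [y]"
          using h(6) by (cases ys rule: rev_cases) auto
        have l2: "list_all2 (\<lambda>x y. (x, y) \<in> I \<tau>) xs' ys'" "(x, y) \<in> I \<tau>"
          using h(6) snoc ys by (auto simp: list_all2_append1 list_all2_Cons1 dest: list_all2_lengthD)
        have "(p @ a # xs', p @ b # ys', \<tau>) \<in> RG S E tp I (Suc m)"
          unfolding IH
          apply (rule exI[of _ p], rule exI[of _ a], rule exI[of _ b],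
                 rule exI[of _ xs'], rule exI[of _ ys'])
          using h snoc Suc l2 by auto
        then show ?thesis using h snoc ys Suc l2 by auto
      qed
    qed
  qed
qed


theorem lemma3p7:
  fixes S :: "'a set" and E :: "('a \<times> 'a) set" and T :: "'b set"
    and tp :: "'a \<times> 'a \<Rightarrow> 'b" and I :: "'b \<Rightarrow> ('a \<times> 'a) set"
    and m :: nat and w v :: "'a list"
  assumes "IGS S E T tp I" and "GR1 S T I" and "GR2 S E T tp I" and "GR3 T I"
    and "w \<in> words S m" and "v \<in> words S m" and "w \<noteq> v"
    and "k = first_diff w v"
  shows "((w, v) \<in> RG_edges S E tp I m \<longleftrightarrow>
            (w ! (k - 1), v ! (k - 1)) \<in> E \<and>
            (\<forall>i. k < i \<and> i \<le> m \<longrightarrow> (w ! (i - 1), v ! (i - 1)) \<in> I (tp (w ! (k - 1), v ! (k - 1)))))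
       \<and> ((w, v) \<in> RG_edges S E tp I m \<longrightarrow> RG_type S E tp I m w v = tp (w ! (k - 1), v ! (k - 1)))"
proof -
  have irr: "\<And>a. (a, a) \<notin> E" using assms(1)
    unfolding IGS_def connected_graph_def is_graph_def by blast
  have lw: "length w = m" "length v = m" "set w \<subseteq> S" using assms(5,6) by (auto simp: words_def)
  have ex: "take m w \<noteq> take m v" using lw assms(7) by simp
  have kle: "k \<le> m" unfolding assms(8) first_diff_def by (rule Least_le[where P="\<lambda>k. take k w \<noteq> take k v", OF ex])
  have kd: "take k w \<noteq> take k v" unfolding assms(8) first_diff_def by (rule LeastI[where P="\<lambda>k. take k w \<noteq> take k v", OF ex])
  have k0: "k \<noteq> 0" using kd by (cases k) auto
  have ke: "take (k - 1) w = take (k - 1) v"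
    using not_less_Least[of "k - 1" "\<lambda>k. take k w \<noteq> take k v"] k0 assms(8)
    unfolding first_diff_def by auto
  have kn: "w ! (k - 1) \<noteq> v ! (k - 1)"
  proof
    assume "w ! (k - 1) = v ! (k - 1)"
    then have "take (Suc (k - 1)) w = take (Suc (k - 1)) v"
      using ke kle k0 lw take_Suc_conv_app_nth[of "k - 1" w] take_Suc_conv_app_nth[of "k - 1" v]
      by (simp del: take_Suc)
    then show False using kd k0 by simp
  qed
  define p where "p = take (k - 1) w"
  have wd: "w = p @ w ! (k - 1) # drop k w"
    using id_take_nth_drop[of "k - 1" w] kle k0 lw unfolding p_def by simp
  have vd: "v = p @ v ! (k - 1) # drop k v"
    using id_take_nth_drop[of "k - 1" v] kle k0 lw ke unfolding p_def by simp
  have lp: "length p = k - 1" using kle k0 lw unfolding p_def by simp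
  have ps: "set p \<subseteq> S" using lw set_take_subset[of "k - 1" w] unfolding p_def by blast
  have m1: "m \<ge> 1" using kle k0 by simp
  have la: "list_all2 P (drop k w) (drop k v) \<longleftrightarrow>
      (\<forall>i. k < i \<and> i \<le> m \<longrightarrow> P (w ! (i - 1)) (v ! (i - 1)))" for P
  proof
    assume h: "list_all2 P (drop k w) (drop k v)"
    show "\<forall>i. k < i \<and> i \<le> m \<longrightarrow> P (w ! (i - 1)) (v ! (i - 1))"
    proof (intro allI impI)
      fix i assume i: "k < i \<and> i \<le> m"
      have j: "i - 1 - k < length (drop k w)" using i lw by (simp, linarith)
      have "P (drop k w ! (i - 1 - k)) (drop k v ! (i - 1 - k))"
        using h j unfolding list_all2_conv_all_nth by blast
      moreover have "k + (i - 1 - k) = i - 1" using i by simp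
      ultimately show "P (w ! (i - 1)) (v ! (i - 1))" using kle lw by (simp add: nth_drop)
    qed
  next
    assume h: "\<forall>i. k < i \<and> i \<le> m \<longrightarrow> P (w ! (i - 1)) (v ! (i - 1))"
    show "list_all2 P (drop k w) (drop k v)"
      unfolding list_all2_conv_all_nth
    proof (intro conjI allI impI)
      show "length (drop k w) = length (drop k v)" using lw by simp
      fix j assume "j < length (drop k w)"
      then show "P (drop k w ! j) (drop k v ! j)"
        using h[rule_format, of "k + j + 1"] lw by simp
    qed
  qed
  have char: "(w, v, \<tau>) \<in> RG S E tp I m \<longleftrightarrow>
      (w ! (k - 1), v ! (k - 1)) \<in> E \<and> \<tau> = tp (w ! (k - 1), v ! (k - 1)) \<and>
      (\<forall>i. k < i \<and> i \<le> m \<longrightarrow> (w ! (i - 1), v ! (i - 1)) \<in> I \<tau>)" for \<tau>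
  proof
    assume "(w, v, \<tau>) \<in> RG S E tp I m"
    then obtain q a b xs ys where h: "w = q @ a # xs" "v = q @ b # ys" "set q \<subseteq> S"
          "(a, b) \<in> E" "\<tau> = tp (a, b)" "list_all2 (\<lambda>x y. (x, y) \<in> I \<tau>) xs ys"
      by (auto simp only: RG_char[OF m1])
    have ab: "a \<noteq> b" using h(4) irr by blast
    have kq: "k = Suc (length q)" using fd_app[OF ab] h assms(8) by simp
    have "w ! (k - 1) = a" "v ! (k - 1) = b" "drop k w = xs" "drop k v = ys"
      using h kq by auto
    moreover have "\<forall>i. k < i \<and> i \<le> m \<longrightarrow> (w ! (i - 1), v ! (i - 1)) \<in> I \<tau>"
      using h(6) la[of "\<lambda>x y. (x, y) \<in> I \<tau>"] \<open>drop k w = xs\<close> \<open>drop k v = ys\<close> by simp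
    ultimately show "(w ! (k - 1), v ! (k - 1)) \<in> E \<and> \<tau> = tp (w ! (k - 1), v ! (k - 1)) \<and>
      (\<forall>i. k < i \<and> i \<le> m \<longrightarrow> (w ! (i - 1), v ! (i - 1)) \<in> I \<tau>)"
      using h(4,5) by simp
  next
    assume h: "(w ! (k - 1), v ! (k - 1)) \<in> E \<and> \<tau> = tp (w ! (k - 1), v ! (k - 1)) \<and>
      (\<forall>i. k < i \<and> i \<le> m \<longrightarrow> (w ! (i - 1), v ! (i - 1)) \<in> I \<tau>)"
    show "(w, v, \<tau>) \<in> RG S E tp I m"
      unfolding RG_char[OF m1]
      apply (rule exI[of _ p], rule exI[of _ "w ! (k - 1)"], rule exI[of _ "v ! (k - 1)"],
             rule exI[of _ "drop k w"], rule exI[of _ "drop k v"])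
      apply (intro conjI)
      using h la[of "\<lambda>x y. (x, y) \<in> I \<tau>"] wd vd ps lw by (simp_all only:, blast+)
  qed
  have e: "(w, v) \<in> RG_edges S E tp I m \<longleftrightarrow> (\<exists>\<tau>. (w, v, \<tau>) \<in> RG S E tp I m)"
    unfolding RG_edges_def by simp
  show ?thesis
  proof (intro conjI impI)
    show "(w, v) \<in> RG_edges S E tp I m \<longleftrightarrow>
            (w ! (k - 1), v ! (k - 1)) \<in> E \<and>
            (\<forall>i. k < i \<and> i \<le> m \<longrightarrow> (w ! (i - 1), v ! (i - 1)) \<in> I (tp (w ! (k - 1), v ! (k - 1))))"
      unfolding e char by auto
    assume "(w, v) \<in> RG_edges S E tp I m"
    then obtain \<tau> where t: "(w, v, \<tau>) \<in> RG S E tp I m" unfolding e by blast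
    show "RG_type S E tp I m w v = tp (w ! (k - 1), v ! (k - 1))"
      unfolding RG_type_def
    proof (rule the_equality)
      show "(w, v, tp (w ! (k - 1), v ! (k - 1))) \<in> RG S E tp I m"
        using t char by auto
      show "\<And>\<tau>'. (w, v, \<tau>') \<in> RG S E tp I m \<Longrightarrow> \<tau>' = tp (w ! (k - 1), v ! (k - 1))"
        using char by blast
    qed
  qed
qed

end
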